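(* Let $N=(A,B,C,\eta,\chi,\psi)$ be an extended $\eta$-diagram. Then $\Delta(N)\cong(A',B',C',\eta',\chi',\psi')$ where $B'=\mathrm{Hom}(B,\mathbb{Z}/4)$; $A'$ is the set of pairs $(g,h)$ with $g\colon B\to\mathbb{Z}/2$, $h\colon C\to\mathbb{Z}$ such that $g\circ\chi$ equals $h$ followed by reduction $\mathbb{Z}\to\mathbb{Z}/2$; $C'$ is the set of pairs $(f,g)$ with $f\colon A\to\mathbb{Z}$, $g\colon B\to\mathbb{Z}/2$ such that $g\circ\chi\circ\eta$ equals $f$ followed by reduction $\mathbb{Z}\to\mathbb{Z}/2$; and, with $t\colon\mathbb{Z}/2\to\mathbb{Z}/4$ and $s\colon\mathbb{Z}/4\to\mathbb{Z}/2$ the unique nonzero homomorphisms, the structure maps $\psi'\colon B'\to A'$, $\eta'\colon A'\to C'$, $\chi'\colon C'\to B'$ are $\psi'(g)=(sg,0)$, $\eta'(g,h)=(0,g)$, $\chi'(f,g)=tg$.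
   Context: An extended $\eta$-diagram $N=(A,B,C,\eta,\chi,\psi)$ is a diagram of abelian groups $B\xrightarrow{\psi}A\xrightarrow{\eta}C\xrightarrow{\chi}B$ with $2\eta=0$, $\psi\chi=0$, $\chi\eta\psi=2\cdot1_B$. Let $\mathcal{J}$ be the additive category with objects $a,b,c$, generated by morphisms $\rho\colon a\to b$, $\eta\colon c\to a$, $\beta\colon b\to c$ subject to $2\rho=2\eta=2\beta=0$, $\beta\rho=0$, $\rho\eta\beta=2\cdot1_b$; explicitly $\mathcal{J}(a,a)=\mathbb{Z}$, $\mathcal{J}(a,b)=(\mathbb{Z}/2)\rho$, $\mathcal{J}(a,c)=0$, $\mathcal{J}(b,a)=(\mathbb{Z}/2)\eta\beta$, $\mathcal{J}(b,b)=\mathbb{Z}/4$, $\mathcal{J}(b,c)=(\mathbb{Z}/2)\beta$, $\mathcal{J}(c,a)=(\mathbb{Z}/2)\eta$, $\mathcal{J}(c,b)=(\mathbb{Z}/2)\rho\eta$, $\mathcal{J}(c,c)=\mathbb{Z}$. Extended $\eta$-diagrams are identified with additive functors $\mathcal{J}^{op}\to\mathrm{Ab}$ via $N(a)=A$, $N(b)=B$, $N(c)=C$, $N(\rho)=\psi$, $N(\eta)=\eta$, $N(\beta)=\chi$; morphisms are natural transformations; this category is $\mathrm{EED}$. $F_x=\mathcal{J}(-,x)$. $\Delta\colon\mathcal{J}^{op}\to\mathcal{J}$ is the functor with $\Delta(a)=c$, $\Delta(b)=b$, $\Delta(c)=a$, $\Delta(\rho)=\beta$, $\Delta(\eta)=\eta$,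 $\Delta(\beta)=\rho$. For $N\in\mathrm{EED}$, $\Delta(N)(x)=\mathrm{EED}(N,F_{\Delta(x)})$, functorial in $x$ via composition with $F_{\Delta(u)}$; its $A$-, $B$-, $C$-groups are $\Delta(N)(a),\Delta(N)(b),\Delta(N)(c)$. *)

theory Defs
  imports Main "HOL-Library.Numeral_Type"
begin

definition hom_add :: "('a::ab_group_add \<Rightarrow> 'b::ab_group_add) \<Rightarrow> bool" where
  "hom_add f \<longleftrightarrow> (\<forall>x y. f (x + y) = f x + f y)"

datatype obj = Oa | Ob | Oc

text \<open>J(x,y) is a cyclic group; its elements are represented by integers
  (multiples of the canonical generator: identity, rho, eta beta, beta, eta,
  rho eta), normalised modulo the order of the group (order 0 = infinite
  cyclic, order 1 = trivial group).\<close>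

fun Jord :: "obj \<Rightarrow> obj \<Rightarrow> int" where
  "Jord Oa Oa = 0"
| "Jord Oc Oc = 0"
| "Jord Oa Oc = 1"
| "Jord Ob Ob = 4"
| "Jord _ _ = 2"

definition Jnorm :: "obj \<Rightarrow> obj \<Rightarrow> int \<Rightarrow> int" where
  "Jnorm x y n = (if Jord x y = 0 then n else n mod Jord x y)"

definition Jhom :: "obj \<Rightarrow> obj \<Rightarrow> int set" where
  "Jhom x y = {n. Jnorm x y n = n}"

definition Jadd :: "obj \<Rightarrow> obj \<Rightarrow> int \<Rightarrow> int \<Rightarrow> int" where
  "Jadd x y m n = Jnorm x y (m + n)"

text \<open>Composition coefficient: gen(y,z) o gen(x,y) = Jk x y z * gen(x,z).\<close>
fun Jk :: "obj \<Rightarrow> obj \<Rightarrow> obj \<Rightarrow> int" where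
  "Jk Ob Oa Ob = 2"   \<comment> \<open>rho o (eta beta) = rho eta beta = 2\<close>
| "Jk Ob Oc Ob = 2"   \<comment> \<open>(rho eta) o beta = 2\<close>
| "Jk Ob Oc Oa = 1"   \<comment> \<open>eta o beta\<close>
| "Jk Oc Oa Ob = 1"   \<comment> \<open>rho o eta\<close>
| "Jk x y z = (if x = y \<or> y = z then 1 else 0)"

text \<open>Jcomp x y z g f = g o f for f : x -> y and g : y -> z.\<close>
definition Jcomp :: "obj \<Rightarrow> obj \<Rightarrow> obj \<Rightarrow> int \<Rightarrow> int \<Rightarrow> int" where
  "Jcomp x y z g f = Jnorm x z (g * f * Jk x y z)"

fun Delta_obj :: "obj \<Rightarrow> obj" where
  "Delta_obj Oa = Oc"
| "Delta_obj Ob = Ob"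
| "Delta_obj Oc = Oa"

definition ext_eta_diagram ::
  "('a::ab_group_add \<Rightarrow> 'c::ab_group_add) \<Rightarrow> ('c \<Rightarrow> 'b::ab_group_add) \<Rightarrow> ('b \<Rightarrow> 'a) \<Rightarrow> bool" where
  "ext_eta_diagram eta chi psi \<longleftrightarrow>
     hom_add eta \<and> hom_add chi \<and> hom_add psi \<and>
     (\<forall>x. eta x + eta x = 0) \<and>
     (\<forall>y. psi (chi y) = 0) \<and>
     (\<forall>y. chi (eta (psi y)) = y + y)"

text \<open>EED(N, F_y): natural transformations from N to the representable F_y = J(-,y).
  F_y(u) is precomposition with u.  A transformation is a triple of components
  (tau_a : A -> J(a,y), tau_b : B -> J(b,y), tau_c : C -> J(c,y)); additivity of the
  components and naturality with respect to the generating morphisms rho, eta, beta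
  (equivalent to naturality w.r.t. all morphisms, both functors being additive).\<close>
definition nat_to_rep ::
  "('a::ab_group_add \<Rightarrow> 'c::ab_group_add) \<Rightarrow> ('c \<Rightarrow> 'b::ab_group_add) \<Rightarrow> ('b \<Rightarrow> 'a) \<Rightarrow> obj
   \<Rightarrow> (('a \<Rightarrow> int) \<times> ('b \<Rightarrow> int) \<times> ('c \<Rightarrow> int)) set" where
  "nat_to_rep eta chi psi y = {(ta, tb, tc).
     (\<forall>m. ta m \<in> Jhom Oa y) \<and> (\<forall>m. tb m \<in> Jhom Ob y) \<and> (\<forall>m. tc m \<in> Jhom Oc y) \<and>
     (\<forall>m n. ta (m + n) = Jadd Oa y (ta m) (ta n)) \<and>
     (\<forall>m n. tb (m + n) = Jadd Ob y (tb m) (tb n)) \<and>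
     (\<forall>m n. tc (m + n) = Jadd Oc y (tc m) (tc n)) \<and>
     (\<forall>m. ta (psi m) = Jcomp Oa Ob y (tb m) 1) \<and>   \<comment> \<open>naturality for rho : a -> b\<close>
     (\<forall>m. tc (eta m) = Jcomp Oc Oa y (ta m) 1) \<and>   \<comment> \<open>naturality for eta : c -> a\<close>
     (\<forall>m. tb (chi m) = Jcomp Ob Oc y (tc m) 1)}"    \<comment> \<open>naturality for beta : b -> c\<close>

definition nat_add :: "obj \<Rightarrow> (('a \<Rightarrow> int) \<times> ('b \<Rightarrow> int) \<times> ('c \<Rightarrow> int))
     \<Rightarrow> (('a \<Rightarrow> int) \<times> ('b \<Rightarrow> int) \<times> ('c \<Rightarrow> int)) \<Rightarrow> (('a \<Rightarrow> int) \<times> ('b \<Rightarrow> int) \<times> ('c \<Rightarrow> int))" where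
  "nat_add y \<tau> \<sigma> = (case \<tau> of (ta, tb, tc) \<Rightarrow> case \<sigma> of (sa, sb, sc) \<Rightarrow>
      (\<lambda>m. Jadd Oa y (ta m) (sa m), \<lambda>m. Jadd Ob y (tb m) (sb m), \<lambda>m. Jadd Oc y (tc m) (sc m)))"

text \<open>Composition with F_g : F_y -> F_y' for the generator g : y -> y' (postcomposition).\<close>
definition nat_post :: "obj \<Rightarrow> obj \<Rightarrow> (('a \<Rightarrow> int) \<times> ('b \<Rightarrow> int) \<times> ('c \<Rightarrow> int))
     \<Rightarrow> (('a \<Rightarrow> int) \<times> ('b \<Rightarrow> int) \<times> ('c \<Rightarrow> int))" where
  "nat_post y y' \<tau> = (case \<tau> of (ta, tb, tc) \<Rightarrow>
      (\<lambda>m. Jcomp Oa y y' 1 (ta m), \<lambda>m. Jcomp Ob y y' 1 (tb m), \<lambda>m. Jcomp Oc y y' 1 (tc m)))"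

definition DeltaN where
  "DeltaN eta chi psi x = nat_to_rep eta chi psi (Delta_obj x)"

text \<open>Structure maps of Delta(N): Delta(N)(u) = composition with F_Delta(u), for
  Delta(rho) = beta : b -> c, Delta(eta) = eta : c -> a, Delta(beta) = rho : a -> b.\<close>
definition Delta_psi where "Delta_psi = nat_post Ob Oc"
definition Delta_eta where "Delta_eta = nat_post Oc Oa"
definition Delta_chi where "Delta_chi = nat_post Oa Ob"

definition t_map :: "2 \<Rightarrow> 4" where
  "t_map = (THE t. hom_add t \<and> t \<noteq> (\<lambda>_. 0))"
definition s_map :: "4 \<Rightarrow> 2" where
  "s_map = (THE s. hom_add s \<and> s \<noteq> (\<lambda>_. 0))"

definition A' :: "('c::ab_group_add \<Rightarrow> 'b::ab_group_add) \<Rightarrow> (('b \<Rightarrow> 2) \<times> ('c \<Rightarrow> int)) set" where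
  "A' chi = {(g, h). hom_add g \<and> hom_add h \<and> (\<forall>m. g (chi m) = of_int (h m))}"

definition B' :: "('b::ab_group_add \<Rightarrow> 4) set" where
  "B' = {g. hom_add g}"

definition C' :: "('a::ab_group_add \<Rightarrow> 'c::ab_group_add) \<Rightarrow> ('c \<Rightarrow> 'b::ab_group_add)
     \<Rightarrow> (('a \<Rightarrow> int) \<times> ('b \<Rightarrow> 2)) set" where
  "C' eta chi = {(f, g). hom_add f \<and> hom_add g \<and> (\<forall>m. g (chi (eta m)) = of_int (f m))}"

definition psi' :: "('b \<Rightarrow> 4) \<Rightarrow> ('b \<Rightarrow> 2) \<times> ('c \<Rightarrow> int)" where
  "psi' g = (s_map \<circ> g, \<lambda>_. 0)"
definition eta' :: "('b \<Rightarrow> 2) \<times> ('c \<Rightarrow> int) \<Rightarrow> ('a \<Rightarrow> int) \<times> ('b \<Rightarrow> 2)" where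
  "eta' p = (case p of (g, h) \<Rightarrow> (\<lambda>_. 0, g))"
definition chi' :: "('a \<Rightarrow> int) \<times> ('b \<Rightarrow> 2) \<Rightarrow> ('b \<Rightarrow> 4)" where
  "chi' p = (case p of (f, g) \<Rightarrow> t_map \<circ> g)"

end

theory Submission
  imports Defs
begin

definition r2 :: "2 \<Rightarrow> int" where "r2 x = Rep_bit0 x"
definition r4 :: "4 \<Rightarrow> int" where "r4 x = Rep_bit0 x"

lemma r2_of_int[simp]: "r2 (of_int z) = z mod 2"
  using bit0.Rep_Abs_mod[where 'a=num1, of z] by (simp add: r2_def bit0.of_int_eq)
lemma r4_of_int[simp]: "r4 (of_int z) = z mod 4"
  using bit0.Rep_Abs_mod[where 'a="num1 bit0", of z] by (simp add: r4_def bit0.of_int_eq)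
lemma of_int_r2[simp]: "of_int (r2 x) = (x::2)"
  by (metis bit0.Rep_inverse bit0.Rep_mod bit0.of_int_eq r2_def)
lemma of_int_r4[simp]: "of_int (r4 x) = (x::4)"
  by (metis bit0.Rep_inverse bit0.Rep_mod bit0.of_int_eq r4_def)
lemma r2_range: "r2 x = 0 \<or> r2 x = 1"
proof -
  have "r2 x = r2 x mod 2" by (metis of_int_r2 r2_of_int)
  moreover have "0 \<le> r2 x mod 2" "r2 x mod 2 < 2" by simp_all
  ultimately show ?thesis by linarith
qed
lemma r2_mod[simp]: "r2 x mod 2 = r2 x" by (metis of_int_r2 r2_of_int)
lemma r4_mod[simp]: "r4 x mod 4 = r4 x" by (metis of_int_r4 r4_of_int)
lemma r4_range: "0 \<le> r4 x \<and> r4 x < 4"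
proof -
  have "r4 x = r4 x mod 4" by (metis of_int_r4 r4_of_int)
  then show ?thesis by (metis pos_mod_bound pos_mod_sign zero_less_numeral)
qed
lemma of_int_eq_2: "(of_int a :: 2) = of_int b \<longleftrightarrow> a mod 2 = b mod 2"
proof
  assume "(of_int a :: 2) = of_int b"
  then have "r2 (of_int a) = r2 (of_int b)" by simp
  then show "a mod 2 = b mod 2" by simp
qed (simp add: bit0.of_int_eq)
lemma of_int_eq_4: "(of_int a :: 4) = of_int b \<longleftrightarrow> a mod 4 = b mod 4"
proof
  assume "(of_int a :: 4) = of_int b"
  then have "r4 (of_int a) = r4 (of_int b)" by simp
  then show "a mod 4 = b mod 4" by simp
qed (simp add: bit0.of_int_eq)
lemma t_aux[simp]: "(of_int (2 * (z mod 2)) :: 4) = of_int (z * 2)"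
  unfolding of_int_eq_4 by presburger
lemma of_int_mod2[simp]: "(of_int (z mod 2) :: 2) = of_int z"
  by (simp add: of_int_eq_2)
lemma of_int_mod4[simp]: "(of_int (z mod 4) :: 4) = of_int z"
  by (simp add: of_int_eq_4)
lemma of_int_mod42[simp]: "(of_int (z mod 4) :: 2) = of_int z"
  by (simp add: of_int_eq_2 mod_mod_cancel)
lemma r2_add: "r2 (x + y) = (r2 x + r2 y) mod 2"
  by (metis of_int_add of_int_r2 r2_of_int)
lemma r4_add: "r4 (x + y) = (r4 x + r4 y) mod 4"
  by (metis of_int_add of_int_r4 r4_of_int)

lemma hom_zero: "hom_add f \<Longrightarrow> f 0 = 0"
  unfolding hom_add_def by (metis add_cancel_right_right add_0)
lemma hom_addD: "hom_add f \<Longrightarrow> f (x + y) = f x + f y"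
  unfolding hom_add_def by blast
lemma hom_of_nat: "hom_add (f::'a::comm_ring_1 \<Rightarrow> 'b::comm_ring_1) \<Longrightarrow> f (of_nat n) = of_nat n * f 1"
  by (induction n) (auto simp: hom_zero hom_addD distrib_right add.commute)

lemma hom4: "hom_add (f::4 \<Rightarrow> 'b::comm_ring_1) \<Longrightarrow> f x = of_int (r4 x) * f 1"
proof -
  assume h: "hom_add f"
  have "x = of_nat (nat (r4 x))" using r4_range[of x] by (metis of_int_r4 of_nat_nat)
  then have "f x = of_nat (nat (r4 x)) * f 1" using hom_of_nat[OF h] by metis
  then show ?thesis using r4_range[of x] by (metis of_int_of_nat_eq int_nat_eq)
qed
lemma hom2: "hom_add (f::2 \<Rightarrow> 'b::comm_ring_1) \<Longrightarrow> f x = of_int (r2 x) * f 1"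
proof -
  assume h: "hom_add f"
  have ge: "r2 x \<ge> 0" using r2_range[of x] by auto
  have "x = of_nat (nat (r2 x))" using ge by (metis of_int_r2 of_nat_nat)
  then have "f x = of_nat (nat (r2 x)) * f 1" using hom_of_nat[OF h] by metis
  then show ?thesis using ge by (metis of_int_of_nat_eq int_nat_eq)
qed

lemma s_map_eq: "s_map = (\<lambda>x. of_int (r4 x))"
  unfolding s_map_def
proof (rule the_equality)
  show "hom_add (\<lambda>x. of_int (r4 x) :: 2) \<and> (\<lambda>x. of_int (r4 x) :: 2) \<noteq> (\<lambda>_. 0)"
  proof
    show "hom_add (\<lambda>x. of_int (r4 x) :: 2)" unfolding hom_add_def by (simp add: r4_add)
    have "r4 1 = 1" by (simp add: r4_def bit0.Rep_1)
    then have "(of_int (r4 1) :: 2) \<noteq> 0" by simp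
    then show "(\<lambda>x. of_int (r4 x) :: 2) \<noteq> (\<lambda>_. 0)" by metis
  qed
next
  fix s :: "4 \<Rightarrow> 2" assume a: "hom_add s \<and> s \<noteq> (\<lambda>_. 0)"
  have e: "\<And>x. s x = of_int (r4 x) * s 1" using a hom4 by blast
  have "s 1 \<noteq> 0" using a e by (metis mult_zero_right)
  then have "s 1 = 1" using r2_range[of "s 1"] by (metis of_int_r2 of_int_0 of_int_1)
  then show "s = (\<lambda>x. of_int (r4 x))"
  proof -
    assume s1: "s 1 = 1"
    show ?thesis by (rule ext, subst e, simp add: s1)
  qed
qed

lemma t_map_eq: "t_map = (\<lambda>x. of_int (2 * r2 x))"
  unfolding t_map_def
proof (rule the_equality)
  show "hom_add (\<lambda>x. of_int (2 * r2 x) :: 4) \<and> (\<lambda>x. of_int (2 * r2 x) :: 4) \<noteq> (\<lambda>_. 0)"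
  proof
    show "hom_add (\<lambda>x. of_int (2 * r2 x) :: 4)" unfolding hom_add_def
    proof (intro allI)
      fix x y :: 2
      have "(of_int (2 * ((r2 x + r2 y) mod 2)) :: 4) = of_int (2 * r2 x + 2 * r2 y)"
        unfolding of_int_eq_4 by presburger
      then show "(of_int (2 * r2 (x + y)) :: 4) = of_int (2 * r2 x) + of_int (2 * r2 y)"
        by (simp add: r2_add)
    qed
    have "r2 1 = 1" by (simp add: r2_def bit0.Rep_1)
    then have "(of_int (2 * r2 1) :: 4) \<noteq> 0" by simp
    then show "(\<lambda>x. of_int (2 * r2 x) :: 4) \<noteq> (\<lambda>_. 0)" by metis
  qed
next
  fix t :: "2 \<Rightarrow> 4" assume a: "hom_add t \<and> t \<noteq> (\<lambda>_. 0)"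
  have e: "\<And>x. t x = of_int (r2 x) * t 1" using a hom2 by blast
  have n0: "t 1 \<noteq> 0" using a e by (metis mult_zero_right)
  have "t 1 + t 1 = t (1 + 1)" using a hom_addD by metis
  also have "(1::2) + 1 = 0" by simp
  finally have "t 1 + t 1 = 0" using a hom_zero by metis
  then have "of_int (2 * r4 (t 1)) = (of_int 0 :: 4)" by (metis mult_2 of_int_add of_int_r4 of_int_0)
  then have "(2 * r4 (t 1)) mod 4 = 0" by (simp only: of_int_eq_4) simp
  moreover have "r4 (t 1) \<noteq> 0" using n0 by (metis of_int_r4 of_int_0)
  ultimately have "r4 (t 1) = 2" using r4_range[of "t 1"] by presburger
  then have "t 1 = 2" by (metis of_int_r4 of_int_numeral)
  then show "t = (\<lambda>x. of_int (2 * r2 x))"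
  proof -
    assume t1: "t 1 = 2"
    show ?thesis by (rule ext, subst e, simp add: t1 mult.commute)
  qed
qed


lemma r4_0[simp]: "r4 0 = 0" using r4_of_int[of 0] by simp
lemma r2_0[simp]: "r2 0 = 0" using r2_of_int[of 0] by simp

lemma mod2_iff: "(x::int) mod 2 = x \<longleftrightarrow> x = 0 \<or> x = 1" by presburger
lemma mod4_iff: "(x::int) mod 4 = x \<longleftrightarrow> 0 \<le> x \<and> x < 4" by presburger

lemma two_torsion4:
  assumes g: "hom_add (g::'b::ab_group_add \<Rightarrow> 4)" and x: "x + x = 0"
  shows "r4 (g x) = 0 \<or> r4 (g x) = 2"
proof -
  have "g x + g x = 0" using hom_addD[OF g, of x x] x hom_zero[OF g] by simp
  then have "r4 (g x + g x) = 0" by simp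
  then have "(r4 (g x) + r4 (g x)) mod 4 = 0" by (simp only: r4_add)
  then show ?thesis using r4_range[of "g x"] by presburger
qed

lemma int_torsion: "hom_add (f::'a::ab_group_add \<Rightarrow> int) \<Longrightarrow> x + x = 0 \<Longrightarrow> f x = 0"
  using hom_addD[of f x x] hom_zero[of f] by simp

lemmas J = nat_to_rep_def Jhom_def Jnorm_def Jadd_def Jcomp_def nat_add_def nat_post_def DeltaN_def

theorem proposition7p8:
  fixes eta :: "'a::ab_group_add \<Rightarrow> 'c::ab_group_add"
    and chi :: "'c \<Rightarrow> 'b::ab_group_add"
    and psi :: "'b \<Rightarrow> 'a"
  assumes "ext_eta_diagram eta chi psi"
  shows "\<exists>\<Phi>a \<Phi>b \<Phi>c.
     bij_betw \<Phi>a (DeltaN eta chi psi Oa) (A' chi) \<and>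
     bij_betw \<Phi>b (DeltaN eta chi psi Ob) B' \<and>
     bij_betw \<Phi>c (DeltaN eta chi psi Oc) (C' eta chi) \<and>
     (\<forall>\<tau>\<in>DeltaN eta chi psi Oa. \<forall>\<sigma>\<in>DeltaN eta chi psi Oa.
        \<Phi>a (nat_add (Delta_obj Oa) \<tau> \<sigma>) =
          (\<lambda>m. fst (\<Phi>a \<tau>) m + fst (\<Phi>a \<sigma>) m, \<lambda>m. snd (\<Phi>a \<tau>) m + snd (\<Phi>a \<sigma>) m)) \<and>
     (\<forall>\<tau>\<in>DeltaN eta chi psi Ob. \<forall>\<sigma>\<in>DeltaN eta chi psi Ob.
        \<Phi>b (nat_add (Delta_obj Ob) \<tau> \<sigma>) = (\<lambda>m. \<Phi>b \<tau> m + \<Phi>b \<sigma> m)) \<and>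
     (\<forall>\<tau>\<in>DeltaN eta chi psi Oc. \<forall>\<sigma>\<in>DeltaN eta chi psi Oc.
        \<Phi>c (nat_add (Delta_obj Oc) \<tau> \<sigma>) =
          (\<lambda>m. fst (\<Phi>c \<tau>) m + fst (\<Phi>c \<sigma>) m, \<lambda>m. snd (\<Phi>c \<tau>) m + snd (\<Phi>c \<sigma>) m)) \<and>
     (\<forall>\<tau>\<in>DeltaN eta chi psi Ob. \<Phi>a (Delta_psi \<tau>) = psi' (\<Phi>b \<tau>)) \<and>
     (\<forall>\<tau>\<in>DeltaN eta chi psi Oa. \<Phi>c (Delta_eta \<tau>) = eta' (\<Phi>a \<tau>)) \<and>
     (\<forall>\<tau>\<in>DeltaN eta chi psi Oc. \<Phi>b (Delta_chi \<tau>) = chi' (\<Phi>c \<tau>))"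
proof -
  have eh: "hom_add eta" and ch: "hom_add chi" and ph: "hom_add psi"
    and e2: "\<And>x. eta x + eta x = 0" and pc: "\<And>y. psi (chi y) = 0"
    and cep: "\<And>y. chi (eta (psi y)) = y + y"
    using assms unfolding ext_eta_diagram_def by auto
  have ce2: "\<And>a. chi (eta a) + chi (eta a) = 0"
    using hom_addD[OF ch] hom_zero[OF ch] e2 by metis
  have c2: "\<And>c. chi c + chi c = 0"
    using cep pc hom_zero[OF eh] hom_zero[OF ch] by metis
  have p2: "\<And>m. psi m + psi m = 0"
    using hom_addD[OF ph] cep pc by metis
  define \<Phi>a :: "('a\<Rightarrow>int)\<times>('b\<Rightarrow>int)\<times>('c\<Rightarrow>int) \<Rightarrow> ('b\<Rightarrow>2)\<times>('c\<Rightarrow>int)"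
    where "\<Phi>a \<tau> = (\<lambda>m. of_int (fst (snd \<tau>) m), snd (snd \<tau>))" for \<tau>
  define \<Psi>a :: "('b\<Rightarrow>2)\<times>('c\<Rightarrow>int) \<Rightarrow> ('a\<Rightarrow>int)\<times>('b\<Rightarrow>int)\<times>('c\<Rightarrow>int)"
    where "\<Psi>a p = ((\<lambda>_. 0), (\<lambda>m. r2 (fst p m)), snd p)" for p
  define \<Phi>b :: "('a\<Rightarrow>int)\<times>('b\<Rightarrow>int)\<times>('c\<Rightarrow>int) \<Rightarrow> ('b\<Rightarrow>4)"
    where "\<Phi>b \<tau> = (\<lambda>m. of_int (fst (snd \<tau>) m))" for \<tau>
  define \<Psi>b :: "('b\<Rightarrow>4) \<Rightarrow> ('a\<Rightarrow>int)\<times>('b\<Rightarrow>int)\<times>('c\<Rightarrow>int)"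
    where "\<Psi>b g = ((\<lambda>a. r4 (g (chi (eta a))) div 2), (\<lambda>m. r4 (g m)), (\<lambda>c. r4 (g (chi c)) div 2))" for g
  define \<Phi>c :: "('a\<Rightarrow>int)\<times>('b\<Rightarrow>int)\<times>('c\<Rightarrow>int) \<Rightarrow> ('a\<Rightarrow>int)\<times>('b\<Rightarrow>2)"
    where "\<Phi>c \<tau> = (fst \<tau>, \<lambda>m. of_int (fst (snd \<tau>) m))" for \<tau>
  define \<Psi>c :: "('a\<Rightarrow>int)\<times>('b\<Rightarrow>2) \<Rightarrow> ('a\<Rightarrow>int)\<times>('b\<Rightarrow>int)\<times>('c\<Rightarrow>int)"
    where "\<Psi>c p = (fst p, \<lambda>m. r2 (snd p m), \<lambda>c. r2 (snd p (chi c)))" for p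
  have memA: "(ta,tb,tc) \<in> DeltaN eta chi psi Oa \<longleftrightarrow>
      (\<forall>m. ta m = 0) \<and> (\<forall>m. tb m mod 2 = tb m) \<and> (\<forall>m n. ta (m + n) = 0) \<and>
      (\<forall>m n. tb (m + n) = (tb m + tb n) mod 2) \<and> (\<forall>m n. tc (m + n) = tc m + tc n) \<and>
      (\<forall>m. ta (psi m) = 0) \<and> (\<forall>m. tc (eta m) = 0) \<and> (\<forall>m. tb (chi m) = tc m mod 2)" for ta tb tc
    by (simp add: J)
  have memB: "(ta,tb,tc) \<in> DeltaN eta chi psi Ob \<longleftrightarrow>
      (\<forall>m. ta m mod 2 = ta m) \<and> (\<forall>m. tb m mod 4 = tb m) \<and> (\<forall>m. tc m mod 2 = tc m) \<and>
      (\<forall>m n. ta (m + n) = (ta m + ta n) mod 2) \<and> (\<forall>m n. tb (m + n) = (tb m + tb n) mod 4) \<and>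
      (\<forall>m n. tc (m + n) = (tc m + tc n) mod 2) \<and> (\<forall>m. ta (psi m) = tb m mod 2) \<and>
      (\<forall>m. tc (eta m) = ta m mod 2) \<and> (\<forall>m. tb (chi m) = tc m * 2 mod 4)" for ta tb tc
    by (simp add: J)
  have memC: "(ta,tb,tc) \<in> DeltaN eta chi psi Oc \<longleftrightarrow>
      (\<forall>m. tb m mod 2 = tb m) \<and> (\<forall>m. tc m mod 2 = tc m) \<and> (\<forall>m n. ta (m + n) = ta m + ta n) \<and>
      (\<forall>m n. tb (m + n) = (tb m + tb n) mod 2) \<and> (\<forall>m n. tc (m + n) = (tc m + tc n) mod 2) \<and>
      (\<forall>m. ta (psi m) = 0) \<and> (\<forall>m. tc (eta m) = ta m mod 2) \<and> (\<forall>m. tb (chi m) = tc m mod 2)" for ta tb tc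
    by (simp add: J)

  have bijA: "bij_betw \<Phi>a (DeltaN eta chi psi Oa) (A' chi)"
  proof (rule bij_betw_byWitness[where f'=\<Psi>a])
    show "\<forall>\<tau>\<in>DeltaN eta chi psi Oa. \<Psi>a (\<Phi>a \<tau>) = \<tau>"
    proof
      fix \<tau> assume "\<tau> \<in> DeltaN eta chi psi Oa"
      moreover obtain ta tb tc where t: "\<tau> = (ta,tb,tc)" by (cases \<tau>)
      ultimately have M: "(ta,tb,tc) \<in> DeltaN eta chi psi Oa" by simp
      show "\<Psi>a (\<Phi>a \<tau>) = \<tau>" using M unfolding memA by (auto simp: t \<Phi>a_def \<Psi>a_def fun_eq_iff)
    qed
    show "\<forall>p\<in>A' chi. \<Phi>a (\<Psi>a p) = p"
      by (auto simp: A'_def \<Phi>a_def \<Psi>a_def fun_eq_iff)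
    show "\<Phi>a ` DeltaN eta chi psi Oa \<subseteq> A' chi"
    proof
      fix p assume "p \<in> \<Phi>a ` DeltaN eta chi psi Oa"
      then obtain ta tb tc where M: "(ta,tb,tc) \<in> DeltaN eta chi psi Oa" and p: "p = \<Phi>a (ta,tb,tc)"
        by auto
      show "p \<in> A' chi" using M unfolding memA p \<Phi>a_def A'_def hom_add_def
        by (auto simp flip: of_int_add)
    qed
    show "\<Psi>a ` A' chi \<subseteq> DeltaN eta chi psi Oa"
    proof
      fix q assume "q \<in> \<Psi>a ` A' chi"
      then obtain g h where M: "(g,h) \<in> A' chi" and q: "q = \<Psi>a (g,h)" by auto
      have hg: "hom_add g" and hh: "hom_add h" and gc: "\<And>m. g (chi m) = of_int (h m)"
        using M by (auto simp: A'_def)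
      show "q \<in> DeltaN eta chi psi Oa" unfolding q \<Psi>a_def memA fst_conv snd_conv
        using r2_range hom_addD[OF hg] hom_addD[OF hh] r2_add int_torsion[OF hh e2] gc
        by (auto simp: mod2_iff)
    qed
  qed
  have bijC: "bij_betw \<Phi>c (DeltaN eta chi psi Oc) (C' eta chi)"
  proof (rule bij_betw_byWitness[where f'=\<Psi>c])
    show "\<forall>\<tau>\<in>DeltaN eta chi psi Oc. \<Psi>c (\<Phi>c \<tau>) = \<tau>"
    proof
      fix \<tau> assume "\<tau> \<in> DeltaN eta chi psi Oc"
      moreover obtain ta tb tc where t: "\<tau> = (ta,tb,tc)" by (cases \<tau>)
      ultimately have M: "(ta,tb,tc) \<in> DeltaN eta chi psi Oc" by simp
      show "\<Psi>c (\<Phi>c \<tau>) = \<tau>" using M unfolding memC by (auto simp: t \<Phi>c_def \<Psi>c_def fun_eq_iff)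
    qed
    show "\<forall>p\<in>C' eta chi. \<Phi>c (\<Psi>c p) = p"
      by (auto simp: C'_def \<Phi>c_def \<Psi>c_def fun_eq_iff)
    show "\<Phi>c ` DeltaN eta chi psi Oc \<subseteq> C' eta chi"
    proof
      fix p assume "p \<in> \<Phi>c ` DeltaN eta chi psi Oc"
      then obtain ta tb tc where M: "(ta,tb,tc) \<in> DeltaN eta chi psi Oc" and p: "p = \<Phi>c (ta,tb,tc)"
        by auto
      show "p \<in> C' eta chi" using M unfolding memC p \<Phi>c_def C'_def hom_add_def
        by (auto simp flip: of_int_add)
    qed
    show "\<Psi>c ` C' eta chi \<subseteq> DeltaN eta chi psi Oc"
    proof
      fix q assume "q \<in> \<Psi>c ` C' eta chi"
      then obtain f g where M: "(f,g) \<in> C' eta chi" and q: "q = \<Psi>c (f,g)" by auto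
      have hf: "hom_add f" and hg: "hom_add g" and gc: "\<And>m. g (chi (eta m)) = of_int (f m)"
        using M by (auto simp: C'_def)
      show "q \<in> DeltaN eta chi psi Oc" unfolding q \<Psi>c_def memC fst_conv snd_conv
        using r2_range hom_addD[OF hf] hom_addD[OF hg] hom_addD[OF ch] r2_add int_torsion[OF hf p2] gc
        by (auto simp: mod2_iff)
    qed
  qed
  have bijB: "bij_betw \<Phi>b (DeltaN eta chi psi Ob) B'"
  proof (rule bij_betw_byWitness[where f'=\<Psi>b])
    show "\<forall>\<tau>\<in>DeltaN eta chi psi Ob. \<Psi>b (\<Phi>b \<tau>) = \<tau>"
    proof
      fix \<tau> assume "\<tau> \<in> DeltaN eta chi psi Ob"
      moreover obtain ta tb tc where t: "\<tau> = (ta,tb,tc)" by (cases \<tau>)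
      ultimately have M: "(ta,tb,tc) \<in> DeltaN eta chi psi Ob" by simp
      have r1: "\<And>m. ta m = 0 \<or> ta m = 1" "\<And>m. tc m = 0 \<or> tc m = 1" "\<And>m. tb m mod 4 = tb m"
        and n1: "\<And>m. tc (eta m) = ta m mod 2" "\<And>m. tb (chi m) = tc m * 2 mod 4"
        using M unfolding memB mod2_iff[symmetric] by auto
      have "ta a = (tb (chi (eta a)) mod 4) div 2" for a
        using n1(2)[of "eta a"] n1(1)[of a] r1(1)[of a] by auto
      moreover have "tc c = (tb (chi c) mod 4) div 2" for c
        using n1(2)[of c] r1(2)[of c] by auto
      ultimately show "\<Psi>b (\<Phi>b \<tau>) = \<tau>" using r1(3) by (auto simp: t \<Phi>b_def \<Psi>b_def fun_eq_iff)
    qed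
    show "\<forall>p\<in>B'. \<Phi>b (\<Psi>b p) = p"
      by (auto simp: B'_def \<Phi>b_def \<Psi>b_def fun_eq_iff)
    show "\<Phi>b ` DeltaN eta chi psi Ob \<subseteq> B'"
    proof
      fix p assume "p \<in> \<Phi>b ` DeltaN eta chi psi Ob"
      then obtain ta tb tc where M: "(ta,tb,tc) \<in> DeltaN eta chi psi Ob" and p: "p = \<Phi>b (ta,tb,tc)"
        by auto
      show "p \<in> B'" using M unfolding memB p \<Phi>b_def B'_def hom_add_def
        by (auto simp flip: of_int_add)
    qed
    show "\<Psi>b ` B' \<subseteq> DeltaN eta chi psi Ob"
    proof
      fix q assume "q \<in> \<Psi>b ` B'"
      then obtain g where M: "g \<in> B'" and q: "q = \<Psi>b g" by auto
      have hg: "hom_add g" using M by (auto simp: B'_def)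
      have v1: "r4 (g (chi (eta a))) = 0 \<or> r4 (g (chi (eta a))) = 2" for a
        using two_torsion4[OF hg ce2] .
      have v2: "r4 (g (chi c)) = 0 \<or> r4 (g (chi c)) = 2" for c
        using two_torsion4[OF hg c2] .
      have ad: "r4 (g (x + y)) = (r4 (g x) + r4 (g y)) mod 4" for x y
        using hom_addD[OF hg] r4_add by metis
      have ad1: "r4 (g (chi (eta (m + n)))) = (r4 (g (chi (eta m))) + r4 (g (chi (eta n)))) mod 4" for m n
        using ad hom_addD[OF eh] hom_addD[OF ch] by metis
      have ad2: "r4 (g (chi (m + n))) = (r4 (g (chi m)) + r4 (g (chi n))) mod 4" for m n
        using ad hom_addD[OF ch] by metis
      have ps: "r4 (g (chi (eta (psi m)))) = (r4 (g m) + r4 (g m)) mod 4" for m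
        using ad cep by metis
      show "q \<in> DeltaN eta chi psi Ob" unfolding q \<Psi>b_def memB
      proof (intro conjI allI)
        show "r4 (g (chi (eta m))) div 2 mod 2 = r4 (g (chi (eta m))) div 2" for m using v1[of m] by auto
        show "r4 (g m) mod 4 = r4 (g m)" for m using r4_range[of "g m"] by simp
        show "r4 (g (chi m)) div 2 mod 2 = r4 (g (chi m)) div 2" for m using v2[of m] by auto
        show "r4 (g (chi (eta (m + n)))) div 2 = (r4 (g (chi (eta m))) div 2 + r4 (g (chi (eta n))) div 2) mod 2" for m n
          using ad1[of m n] v1[of m] v1[of n] by auto
        show "r4 (g (m + n)) = (r4 (g m) + r4 (g n)) mod 4" for m n using ad .
        show "r4 (g (chi (m + n))) div 2 = (r4 (g (chi m)) div 2 + r4 (g (chi n)) div 2) mod 2" for m n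
          using ad2[of m n] v2[of m] v2[of n] by auto
        show "r4 (g (chi (eta (psi m)))) div 2 = r4 (g m) mod 2" for m
          using ps[of m] r4_range[of "g m"] by presburger
        show "r4 (g (chi (eta m))) div 2 = r4 (g (chi (eta m))) div 2 mod 2" for m using v1[of m] by auto
        show "r4 (g (chi m)) = r4 (g (chi m)) div 2 * 2 mod 4" for m using v2[of m] by auto
      qed
    qed
  qed
  show ?thesis
  proof (intro exI[of _ \<Phi>a] exI[of _ \<Phi>b] exI[of _ \<Phi>c] conjI bijA bijB bijC ballI)
    fix \<tau> \<sigma> :: "('a\<Rightarrow>int)\<times>('b\<Rightarrow>int)\<times>('c\<Rightarrow>int)"
    obtain ta tb tc where t: "\<tau> = (ta,tb,tc)" by (cases \<tau>)
    obtain sa sb sc where s: "\<sigma> = (sa,sb,sc)" by (cases \<sigma>)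
    show "\<Phi>a (nat_add (Delta_obj Oa) \<tau> \<sigma>) =
          (\<lambda>m. fst (\<Phi>a \<tau>) m + fst (\<Phi>a \<sigma>) m, \<lambda>m. snd (\<Phi>a \<tau>) m + snd (\<Phi>a \<sigma>) m)"
      by (simp add: t s J \<Phi>a_def)
    show "\<Phi>b (nat_add (Delta_obj Ob) \<tau> \<sigma>) = (\<lambda>m. \<Phi>b \<tau> m + \<Phi>b \<sigma> m)"
      by (simp add: t s J \<Phi>b_def)
    show "\<Phi>c (nat_add (Delta_obj Oc) \<tau> \<sigma>) =
          (\<lambda>m. fst (\<Phi>c \<tau>) m + fst (\<Phi>c \<sigma>) m, \<lambda>m. snd (\<Phi>c \<tau>) m + snd (\<Phi>c \<sigma>) m)"
      by (simp add: t s J \<Phi>c_def)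
    show "\<Phi>a (Delta_psi \<tau>) = psi' (\<Phi>b \<tau>)"
      by (simp add: t J \<Phi>a_def \<Phi>b_def Delta_psi_def psi'_def s_map_eq o_def)
    show "\<Phi>c (Delta_eta \<tau>) = eta' (\<Phi>a \<tau>)"
      by (simp add: t J \<Phi>a_def \<Phi>c_def Delta_eta_def eta'_def)
    show "\<Phi>b (Delta_chi \<tau>) = chi' (\<Phi>c \<tau>)"
      by (simp add: t J \<Phi>b_def \<Phi>c_def Delta_chi_def chi'_def t_map_eq o_def del: of_int_mult)
  qed
qed

end
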